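(* Let $Z>0$, let $W_{at}$ be as in the context with Taylor coefficients $(w_{2k})_{k\ge0}$, let $R_1,\dots,R_n$ be the radial atomic functions with eigenvalues $\epsilon_1,\dots,\epsilon_n$, $\mathcal R=(R_1,\dots,R_n)^T$, $\mathcal E=\mathrm{diag}(\epsilon_1,\dots,\epsilon_n)$, and let $(\zeta_j)_{j\ge0}\subset\mathbb R^n$ be the coefficients of the expansion of $\mathcal R$ at $0$. Then there exist real numbers $(\mu_j^{(k)})_{0\le j\le k\le n-1}$ and $(\nu_j^{(k)})_{0\le j\le k\le n-1}$ such that $$\zeta_{2k}=\sum_{j=0}^k\mu_j^{(k)}\mathcal E^j\zeta_0,\qquad\zeta_{2k+1}=\sum_{j=0}^k\nu_j^{(k)}\mathcal E^j\zeta_0,$$ with $\mu_k^{(k)}\ne0$ for every $0\le k\le n-1$. Moreover, $$\zeta_1=-Z\zeta_0,\qquad\zeta_2=-\tfrac13\mathcal E\zeta_0+\tfrac13(Z^2+w_0)\zeta_0,\qquad\zeta_3=\tfrac29Z\mathcal E\zeta_0-\Big(\tfrac{Z^3}{18}+\tfrac29Zw_0\Big)\zeta_0,$$ $$\zeta_4=\tfrac1{30}\mathcal E^2\zeta_0-\Big(\tfrac{Z^2}{18}+\tfrac{w_0}{15}\Big)\mathcal E\zeta_0+\Big(\tfrac{Z^4}{180}+\tfrac{Z^2w_0}{18}+\tfrac{w_0^2}{30}+\tfrac{w_2}{10}\Big)\zeta_0,$$ $$\zeta_5=-\tfrac{23}{1350}Z\mathcal E^2\zeta_0+\Big(\tfrac{Z^3}{135}+\tfrac{23}{675}w_0Z\Big)\mathcal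 E\zeta_0-\Big(\tfrac{Z^5}{2700}+\tfrac{Z^3w_0}{135}+\tfrac{23}{1350}Zw_0^2+\tfrac{11}{150}Zw_2\Big)\zeta_0.$$
   Context: $W_{at}$ is a smooth bounded real function on $[0,\infty)$ such that $\mathbf x\mapsto W_{at}(|\mathbf x|)$ is smooth on $\mathbb R^3$; hence for every $N$, $W_{at}(r)=\sum_{k=0}^Nw_{2k}r^{2k}+O(r^{2N+2})$ as $r\to0$, which defines the reals $w_{2k}$. For $k=1,\dots,n$, $\varphi_k(\mathbf x)=R_k(|\mathbf x|)Y_{00}$ ($Y_{00}=1/\sqrt{4\pi}$) are $L^2$-normalized eigenfunctions of the atomic Hamiltonian $-\frac12\Delta-\frac{Z}{|\mathbf x|}+W_{at}(|\mathbf x|)$ on $L^2(\mathbb R^3)$ with angular momentum $0$ and eigenvalues $\epsilon_k$; $R_k$ is continuous on $[0,\infty)$ and satisfies $-\frac12R_k''-\frac1rR_k'-\frac ZrR_k+W_{at}R_k=\epsilon_kR_k$ on $(0,\infty)$. The vectors $\zeta_j\in\mathbb R^n$ are the coefficients of the singular expansion of $\mathcal R$ at $r=0$: for every $N$, $\mathcal R(r)-\sum_{j=0}^N\zeta_jr^j=O(r^{N+1})$ as $r\to0^+$. *)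

theory Defs
  imports "HOL-Analysis.Analysis" "HOL-Library.Landau_Symbols"
begin

fun Ck_fun :: "nat \<Rightarrow> ('a::real_normed_vector \<Rightarrow> real) \<Rightarrow> bool" where
  "Ck_fun 0 f = continuous_on UNIV f"
| "Ck_fun (Suc k) f = ((\<forall>x. f differentiable (at x)) \<and>
       (\<forall>v. Ck_fun k (\<lambda>x. frechet_derivative f (at x) v)))"

definition smooth_fun :: "('a::real_normed_vector \<Rightarrow> real) \<Rightarrow> bool" where
  "smooth_fun f \<longleftrightarrow> (\<forall>k. Ck_fun k f)"

end

theory Submission
  imports Defs "HOL-Computational_Algebra.Polynomial"
begin

lemma ev_01: "eventually (\<lambda>r::real. 0 < r \<and> r < 1) (at_right 0)"
  unfolding eventually_at_right_field by (intro exI[of _ 1]) auto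

lemma bmult: "f \<in> O[F](\<lambda>_. 1) \<Longrightarrow> g \<in> O[F](h) \<Longrightarrow> (\<lambda>x. f x * g x) \<in> O[F](h)"
  using landau_o.big.mult[of f F "\<lambda>_. 1" g h] by simp

lemma powO: "b \<le> a \<Longrightarrow> (\<lambda>r::real. r^a) \<in> O[at_right 0](\<lambda>r. r^b)"
  apply (rule bigoI[where c=1])
  using ev_01 by eventually_elim (auto simp: power_decreasing abs_of_nonneg)

lemma tendsto_bigo1: "(f \<longlongrightarrow> (l::real)) F \<Longrightarrow> f \<in> O[F](\<lambda>_. 1)"
proof -
  assume "(f \<longlongrightarrow> l) F"
  then have "eventually (\<lambda>x. dist (f x) l < 1) F" by (rule tendstoD) simp
  then show ?thesis
    apply (intro bigoI[where c="\<bar>l\<bar>+1"])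
    apply (erule eventually_mono)
    by (simp add: dist_real_def)
qed

lemma O_div_tendsto:
  assumes "f \<in> O[at_right 0](\<lambda>r::real. r^(k+1))"
  shows "((\<lambda>r. f r / r^k) \<longlongrightarrow> 0) (at_right 0)"
proof -
  have "(\<lambda>r::real. r^(k+1)) \<in> o[at_right 0](\<lambda>r. r^k)"
  proof (rule smalloI_tendsto)
    have ev: "eventually (\<lambda>r::real. r = r^(k+1)/r^k) (at_right 0)"
      using ev_01 by eventually_elim simp
    have "((\<lambda>r::real. r) \<longlongrightarrow> 0) (at_right 0)"
      by (simp add: tendsto_ident_at)
    from Lim_transform_eventually[OF this ev]
    show "((\<lambda>r::real. r^(k+1)/r^k) \<longlongrightarrow> 0) (at_right 0)" .
    show "eventually (\<lambda>r::real. r^k \<noteq> 0) (at_right 0)"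
      using ev_01 by eventually_elim simp
  qed
  from landau_o.big_small_trans[OF assms this]
  show ?thesis by (rule smalloD_tendsto)
qed

lemma O_tendsto0:
  assumes "f \<in> O[at_right 0](\<lambda>r::real. r^(k+1))"
  shows "(f \<longlongrightarrow> 0) (at_right 0)"
proof -
  have "f \<in> O[at_right 0](\<lambda>r::real. r^(0+1))"
    by (rule landau_o.big_trans[OF assms powO]) simp
  from O_div_tendsto[OF this] show ?thesis by simp
qed

lemma poly_trunc:
  "(\<lambda>r. poly p r - (\<Sum>j\<le>m. coeff p j * r^j)) \<in> O[at_right 0](\<lambda>r::real. r^(m+1))"
proof -
  define M where "M = max m (degree p)"
  have "poly p r = (\<Sum>j\<le>M. coeff p j * r^j)" for r
    unfolding poly_altdef M_def
    by (rule sum.mono_neutral_left) (auto simp: coeff_eq_0)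
  then have eq: "poly p r - (\<Sum>j\<le>m. coeff p j * r^j) = (\<Sum>j\<in>{m<..M}. coeff p j * r^j)" for r
  proof -
    have "{..M} = {..m} \<union> {m<..M}" "{..m} \<inter> {m<..M} = {}" using M_def by auto
    then show ?thesis unfolding \<open>poly p r = _\<close> by (simp add: sum.union_disjoint)
  qed
  have "(\<lambda>r. \<Sum>j\<in>{m<..M}. coeff p j * r^j) \<in> O[at_right 0](\<lambda>r::real. r^(m+1))"
    apply (intro big_sum_in_bigo)
    apply (subst cmult_in_bigo_iff, rule disjI2, rule powO)
    by simp
  then show ?thesis unfolding eq .
qed

lemma at_right_le_within:
  assumes "\<delta> > 0"
  shows "at_right (0::real) \<le> at 0 within {0<..<\<delta>}"
proof (rule filter_leI)
  fix P assume "eventually P (at 0 within {0<..<\<delta>})"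
  then obtain d where d: "d > 0" "\<forall>x\<in>{0<..<\<delta>}. x \<noteq> 0 \<and> dist x 0 < d \<longrightarrow> P x"
    unfolding eventually_at by (elim exE conjE) (rule that)
  show "eventually P (at_right 0)"
    unfolding eventually_at_right_field
  proof (intro exI[of _ "min d \<delta>"] conjI allI impI)
    show "min d \<delta> > 0" using d(1) assms by simp
    fix y :: real assume "y > 0" "y < min d \<delta>"
    then show "P y" using d(2) by (simp add: dist_real_def)
  qed
qed

lemma core:
  fixes E E' h' :: "real \<Rightarrow> real" and d :: real and m :: nat
  assumes m: "m \<ge> 1"
  and dE: "eventually (\<lambda>r. DERIV E r :> E' r) (at_right 0)"
  and dh: "eventually (\<lambda>r. DERIV (\<lambda>s. s^2 * E' s) r :> h' r) (at_right 0)"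
  and hO: "(\<lambda>r. h' r - d * r^m) \<in> O[at_right 0](\<lambda>r. r^(m+1))"
  and EO: "E \<in> O[at_right 0](\<lambda>r. r^(m+1))"
  shows "d = 0"
proof -
  define h where "h s = s^2 * E' s" for s
  have dh': "eventually (\<lambda>r. DERIV h r :> h' r) (at_right 0)"
    using dh unfolding h_def .
  have lim1: "((\<lambda>r. h' r - d * r^m) \<longlongrightarrow> 0) (at_right 0)"
    using O_tendsto0[OF hO] .
  have lim2: "((\<lambda>r::real. d * r^m) \<longlongrightarrow> 0) (at_right 0)"
    using m by (auto intro!: tendsto_eq_intros simp: tendsto_ident_at)
  have "((\<lambda>r. (h' r - d * r^m) + d * r^m) \<longlongrightarrow> 0 + 0) (at_right 0)"
    by (rule tendsto_add[OF lim1 lim2])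
  then have h'0: "(h' \<longlongrightarrow> 0) (at_right 0)" by simp
  have "eventually (\<lambda>r. dist (h' r) 0 < 1) (at_right 0)"
    by (rule tendstoD[OF h'0]) simp
  then have "eventually (\<lambda>r. DERIV h r :> h' r \<and> \<bar>h' r\<bar> \<le> 1) (at_right 0)"
    using dh' by eventually_elim auto
  then obtain \<delta> where \<delta>: "\<delta> > 0" "\<And>r. 0 < r \<Longrightarrow> r < \<delta> \<Longrightarrow> DERIV h r :> h' r \<and> \<bar>h' r\<bar> \<le> 1"
    unfolding eventually_at_right_field by auto
  have lip: "1-lipschitz_on {0<..<\<delta>} h"
  proof (rule lipschitz_onI)
    fix x y assume xy: "x \<in> {0<..<\<delta>}" "y \<in> {0<..<\<delta>}"
    have "norm (h x - h y) \<le> 1 * norm (x - y)"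
    proof (rule field_differentiable_bound[of "{0<..<\<delta>}" h h' 1])
      show "convex {0<..<\<delta>}" by simp
      show "(h has_field_derivative h' z) (at z within {0<..<\<delta>})" if "z \<in> {0<..<\<delta>}" for z
        using \<delta>(2)[of z] that by (auto intro: has_field_derivative_at_within)
      show "norm (h' z) \<le> 1" if "z \<in> {0<..<\<delta>}" for z
        using \<delta>(2)[of z] that by auto
    qed (use xy in auto)
    then show "dist (h x) (h y) \<le> 1 * dist x y" by (simp add: dist_real_def)
  qed simp
  have "0 \<in> closure {0<..<\<delta>}" using \<delta>(1) by simp
  from uniformly_continuous_on_extension_at_closure[OF lipschitz_on_uniformly_continuous[OF lip] this]
  obtain L where "(h \<longlongrightarrow> L) (at 0 within {0<..<\<delta>})" by blast
  then have hL: "(h \<longlongrightarrow> L) (at_right 0)"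
    using tendsto_mono[OF at_right_le_within[OF \<delta>(1)]] by blast
  have E0: "(E \<longlongrightarrow> 0) (at_right 0)"
    using O_tendsto0[OF EO] .
  have ev_pos: "eventually (\<lambda>r::real. r > 0) (at_right 0)"
    by (simp add: eventually_at_right_less)
  have "((\<lambda>r. E r / inverse r) \<longlongrightarrow> - L) (at_right 0)"
  proof (rule lhopital_right_0_at_top[where g'="\<lambda>r. - inverse (r^2)" and f'=E'])
    show "LIM x at_right (0::real). inverse x :> at_top" by (rule filterlim_inverse_at_top_right)
    show "eventually (\<lambda>x. - inverse (x^2) \<noteq> 0) (at_right (0::real))"
      using ev_pos by eventually_elim simp
    show "eventually (\<lambda>x. DERIV E x :> E' x) (at_right 0)" by (rule dE)
    show "eventually (\<lambda>x. DERIV inverse x :> - inverse (x^2)) (at_right (0::real))"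
      using ev_pos by eventually_elim (auto intro!: derivative_eq_intros simp: power2_eq_square)
    have "eventually (\<lambda>x. - h x = E' x / - inverse (x^2)) (at_right 0)"
      using ev_pos by eventually_elim (simp add: h_def field_simps)
    from Lim_transform_eventually[OF tendsto_minus[OF hL] this]
    show "((\<lambda>x. E' x / - inverse (x^2)) \<longlongrightarrow> - L) (at_right 0)" .
  qed
  moreover have "((\<lambda>r. E r / inverse r) \<longlongrightarrow> 0) (at_right 0)"
  proof -
    have "((\<lambda>r. E r * r) \<longlongrightarrow> 0 * 0) (at_right 0)"
      by (intro tendsto_mult E0) (simp add: tendsto_ident_at)
    then show ?thesis by (simp add: divide_inverse)
  qed
  ultimately have "- L = 0" using tendsto_unique[OF trivial_limit_at_right_real] by blast
  then have h0: "(h \<longlongrightarrow> 0) (at_right 0)" using hL by simp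
  have "((\<lambda>r. h r / r^(m+1)) \<longlongrightarrow> d / real (m+1)) (at_right 0)"
  proof (rule lhopital_right_0[where g'="\<lambda>r. real (m+1) * r^m" and f'=h'])
    show "((\<lambda>r::real. r^(m+1)) \<longlongrightarrow> 0) (at_right 0)"
      by (auto intro!: tendsto_eq_intros simp: tendsto_ident_at)
    show "eventually (\<lambda>x. x^(m+1) \<noteq> 0) (at_right (0::real))"
      using ev_pos by eventually_elim simp
    show "eventually (\<lambda>x. real (m+1) * x^m \<noteq> 0) (at_right (0::real))"
      using ev_pos by eventually_elim simp
    show "eventually (\<lambda>x. DERIV (\<lambda>x. x^(m+1)) x :> real (m+1) * x^m) (at_right (0::real))"
      by (intro always_eventually allI) (use DERIV_pow[of "m+1"] in simp)
    have lim3: "((\<lambda>r. (h' r - d * r^m) / r^m) \<longlongrightarrow> 0) (at_right 0)"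
      using O_div_tendsto[OF hO] .
    have lim5: "((\<lambda>r. ((h' r - d * r^m) / r^m + d) / real (m+1)) \<longlongrightarrow> d / real (m+1)) (at_right 0)"
      using tendsto_divide[OF tendsto_add[OF lim3 tendsto_const[of d]] tendsto_const[of "real (m+1)"]] by simp
    have "eventually (\<lambda>r. ((h' r - d * r^m) / r^m + d) / real (m+1) = h' r / (real (m+1) * r^m)) (at_right 0)"
      using ev_pos by eventually_elim (simp add: field_simps)
    from Lim_transform_eventually[OF lim5 this]
    show "((\<lambda>r. h' r / (real (m+1) * r^m)) \<longlongrightarrow> d / real (m+1)) (at_right 0)" .
    show "(h \<longlongrightarrow> 0) (at_right 0)" by (rule h0)
    show "eventually (\<lambda>x. DERIV h x :> h' x) (at_right 0)" by (rule dh')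
  qed
  then have lim4: "((\<lambda>r. h r / r^(m+1)) \<longlongrightarrow> d / real (m+1)) (at_right 0)" .
  have "((\<lambda>r. E r / r^m) \<longlongrightarrow> (d / real (m+1)) / real m) (at_right 0)"
  proof (rule lhopital_right_0[where g'="\<lambda>r. real m * r^(m-1)" and f'=E'])
    show "((\<lambda>r::real. r^m) \<longlongrightarrow> 0) (at_right 0)"
      using m by (auto intro!: tendsto_eq_intros simp: tendsto_ident_at)
    show "eventually (\<lambda>x. x^m \<noteq> 0) (at_right (0::real))"
      using ev_pos by eventually_elim simp
    show "eventually (\<lambda>x. real m * x^(m-1) \<noteq> 0) (at_right (0::real))"
      using ev_pos by eventually_elim (use m in simp)
    show "eventually (\<lambda>x. DERIV (\<lambda>x. x^m) x :> real m * x^(m-1)) (at_right (0::real))"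
      by (intro always_eventually allI) (use DERIV_pow[of m] in simp)
    have lim6: "((\<lambda>r. (h r / r^(m+1)) / real m) \<longlongrightarrow> (d / real (m+1)) / real m) (at_right 0)"
      by (rule tendsto_divide[OF lim4 tendsto_const]) (use m in simp)
    have "eventually (\<lambda>r. (h r / r^(m+1)) / real m = E' r / (real m * r^(m-1))) (at_right 0)"
      using ev_pos
    proof eventually_elim
      case (elim r)
      have "r^(m+1) = r^2 * r^(m-1)" using m by (simp add: power_add[symmetric])
      then show ?case using elim m by (simp add: h_def field_simps)
    qed
    from Lim_transform_eventually[OF lim6 this]
    show "((\<lambda>r. E' r / (real m * r^(m-1))) \<longlongrightarrow> (d / real (m+1)) / real m) (at_right 0)" .
    show "(E \<longlongrightarrow> 0) (at_right 0)" by (rule E0)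
    show "eventually (\<lambda>x. DERIV E x :> E' x) (at_right 0)" by (rule dE)
  qed
  moreover have "((\<lambda>r. E r / r^m) \<longlongrightarrow> 0) (at_right 0)"
    using O_div_tendsto[OF EO] .
  ultimately have "(d / real (m+1)) / real m = 0"
    using tendsto_unique[OF trivial_limit_at_right_real] by blast
  then show "d = 0" using m by simp
qed

definition om :: "(nat \<Rightarrow> real) \<Rightarrow> nat \<Rightarrow> real" where
  "om w a = (if even a then w a else 0)"

definition cc :: "real \<Rightarrow> real \<Rightarrow> (nat \<Rightarrow> real) \<Rightarrow> (nat \<Rightarrow> real) \<Rightarrow> nat \<Rightarrow> real" where
  "cc Z e w z m = (if m = 0 then 0 else if m = 1 then -2*Z*z 0
     else -2*Z*z (m-1) + 2*(\<Sum>a\<le>m-2. om w a * z (m-2-a)) - 2*e*z (m-2))"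

lemma coeff_pR: "coeff (\<Sum>j\<le>m. monom (z j) j) i = (if i \<le> m then z i else (0::real))"
  by (simp add: coeff_sum)

lemma coeff_pW: "coeff (\<Sum>k\<le>m. monom (w (2*k)) (2*k)) a = (if a \<le> 2*m then om w a else (0::real))"
proof (cases "even a")
  case True
  then obtain b where b: "a = 2*b" by blast
  have "coeff (\<Sum>k\<le>m. monom (w (2*k)) (2*k)) a = (\<Sum>k\<le>m. if k = b then w (2*k) else 0)"
    by (simp add: coeff_sum b)
  also have "\<dots> = (if b \<le> m then w (2*b) else 0)" by simp
  finally show ?thesis using b by (simp add: om_def)
next
  case False
  have "coeff (\<Sum>k\<le>m. monom (w (2*k)) (2*k)) a = (\<Sum>k\<le>m. (0::real))"
    unfolding coeff_sum by (rule sum.cong) (use False in auto)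
  then show ?thesis using False by (simp add: om_def)
qed

lemma poly_pR: "poly (\<Sum>j\<le>m. monom (z j) j) r = (\<Sum>j\<le>m. z j * (r::real)^j)"
  by (simp add: poly_sum poly_monom)

lemma poly_pW: "poly (\<Sum>k\<le>m. monom (w (2*k)) (2*k)) r = (\<Sum>k\<le>m. w (2*k) * (r::real)^(2*k))"
  by (simp add: poly_sum poly_monom)

lemma poly_bigo1: "(\<lambda>r. poly p r) \<in> O[at_right (0::real)](\<lambda>_. 1)"
proof (rule tendsto_bigo1)
  have "isCont (poly p) 0" by simp
  then have "(poly p \<longlongrightarrow> poly p 0) (at 0)" by (simp add: isCont_def)
  then show "(poly p \<longlongrightarrow> poly p 0) (at_right 0)"
    by (rule tendsto_mono[rotated]) (simp add: at_le)
qed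

lemma coeff_const1: "coeff [:a:] n = (if n = 0 then a else 0)"
  by (cases n) simp_all

lemma coeff_main:
  fixes Z e :: real and w z :: "nat \<Rightarrow> real" and m j :: nat
  defines "pR \<equiv> (\<Sum>j\<le>m. monom (z j) j)"
  defines "pW \<equiv> (\<Sum>k\<le>m. monom (w (2*k)) (2*k))"
  defines "pg \<equiv> smult (-2*Z) (pCons 0 pR) + smult 2 (pCons 0 (pCons 0 ((pW - [:e:]) * pR)))"
  defines "pD \<equiv> pCons 0 (pCons 0 (pderiv (pderiv pR))) + smult 2 (pCons 0 (pderiv pR))"
  assumes "j \<le> m" "1 \<le> m"
  shows "coeff (pg - pD) j = cc Z e w z j - real j * real (j+1) * z j"
proof (cases j)
  case 0
  then show ?thesis by (simp add: pg_def pD_def cc_def)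
next
  case (Suc j')
  note Sj = Suc
  show ?thesis
  proof (cases j')
    case 0
    then show ?thesis using Sj assms by (simp add: pg_def pD_def cc_def pR_def coeff_pR coeff_pderiv)
  next
    case (Suc k)
    have j: "j = Suc (Suc k)" using Sj Suc by simp
    have cm: "coeff ((pW - [:e:]) * pR) k = (\<Sum>a\<le>k. om w a * z (k-a)) - e * z k"
    proof -
      have "coeff ((pW - [:e:]) * pR) k = (\<Sum>a\<le>k. (om w a - (if a = 0 then e else 0)) * z (k-a))"
        unfolding coeff_mult
        by (rule sum.cong) (use assms j in \<open>auto simp: pW_def pR_def coeff_pW coeff_pR coeff_diff coeff_const1\<close>)
      also have "\<dots> = (\<Sum>a\<le>k. om w a * z (k-a)) - (\<Sum>a\<le>k. (if a = 0 then e else 0) * z (k-a))"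
        by (simp add: left_diff_distrib sum_subtractf)
      also have "(\<Sum>a\<le>k. (if a = 0 then e else 0) * z (k-a)) = e * z k"
      proof -
        have "(\<Sum>a\<le>k. (if a = 0 then e else 0) * z (k-a)) = (\<Sum>a\<le>k. if a = 0 then e * z k else 0)"
          by (rule sum.cong) auto
        then show ?thesis by simp
      qed
      finally show ?thesis .
    qed
    have "coeff pg j = -2*Z*z (Suc k) + 2 * ((\<Sum>a\<le>k. om w a * z (k-a)) - e * z k)"
      using assms j cm by (simp add: pg_def pR_def coeff_pR)
    moreover have "coeff pD j = real (Suc (Suc k)) * real (Suc (Suc (Suc k))) * z (Suc (Suc k))"
      using assms j by (simp add: pD_def pR_def coeff_pR coeff_pderiv algebra_simps)
    ultimately show ?thesis using j by (simp add: cc_def algebra_simps)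
  qed
qed

lemma recur:
  fixes Z e :: real and W R :: "real \<Rightarrow> real" and w z :: "nat \<Rightarrow> real"
  assumes W_bdd: "\<exists>B. \<forall>r\<ge>0. \<bar>W r\<bar> \<le> B"
  and W_exp: "\<forall>N. (\<lambda>r. W r - (\<Sum>k\<le>N. w (2*k) * r ^ (2*k))) \<in> O[at_right 0](\<lambda>r. r ^ (2*N+2))"
  and R_diff: "\<forall>r>0. (R has_real_derivative deriv R r) (at r) \<and>
                   (deriv R has_real_derivative deriv (deriv R) r) (at r)"
  and R_ode: "\<forall>r>0. - (1/2) * deriv (deriv R) r - (1/r) * deriv R r
                  - (Z/r) * R r + W r * R r = e * R r"
  and R_exp: "\<forall>N. (\<lambda>r. R r - (\<Sum>j\<le>N. z j * r ^ j)) \<in> O[at_right 0](\<lambda>r. r ^ (N+1))"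
  shows "real m * real (m+1) * z m = cc Z e w z m"
proof (induction m rule: less_induct)
  case (less m)
  show ?case
  proof (cases "m = 0")
    case True then show ?thesis by (simp add: cc_def)
  next
    case False
    then have m1: "1 \<le> m" by simp
    define pR where "pR = (\<Sum>j\<le>m. monom (z j) j)"
    define pW where "pW = (\<Sum>k\<le>m. monom (w (2*k)) (2*k))"
    define pg where "pg = smult (-2*Z) (pCons 0 pR) + smult 2 (pCons 0 (pCons 0 ((pW - [:e:]) * pR)))"
    define pD where "pD = pCons 0 (pCons 0 (pderiv (pderiv pR))) + smult 2 (pCons 0 (pderiv pR))"
    define E where "E = (\<lambda>r. R r - poly pR r)"
    define E' where "E' = (\<lambda>r. deriv R r - poly (pderiv pR) r)"
    define g where "g = (\<lambda>r. -2*Z*r*R r + 2*r^2*(W r - e)*R r)"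
    define h' where "h' = (\<lambda>r. g r - poly pD r)"
    define d where "d = cc Z e w z m - real m * real (m+1) * z m"
    have ev_pos: "eventually (\<lambda>r::real. r > 0) (at_right 0)"
      by (simp add: eventually_at_right_less)
    have dE: "eventually (\<lambda>r. DERIV E r :> E' r) (at_right 0)"
      using ev_pos
    proof eventually_elim
      case (elim r)
      show ?case unfolding E_def E'_def
        by (rule DERIV_diff) (use R_diff elim in auto)
    qed
    have dh: "eventually (\<lambda>r. DERIV (\<lambda>s. s^2 * E' s) r :> h' r) (at_right 0)"
      using ev_pos
    proof eventually_elim
      case (elim r)
      have d1: "DERIV E' r :> deriv (deriv R) r - poly (pderiv (pderiv pR)) r"
        unfolding E'_def by (rule DERIV_diff) (use R_diff elim in auto)
      have d2: "DERIV (\<lambda>s. s^2) r :> 2 * r"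
        using DERIV_pow[of 2 r] by simp
      have d3: "DERIV (\<lambda>s. s^2 * E' s) r :> 2 * r * E' r + r^2 * (deriv (deriv R) r - poly (pderiv (pderiv pR)) r)"
        using DERIV_mult[OF d2 d1] by (simp add: algebra_simps)
      have ode: "r^2 * deriv (deriv R) r + 2*r*deriv R r = g r"
      proof -
        have "- (1/2) * deriv (deriv R) r - (1/r) * deriv R r - (Z/r) * R r + W r * R r = e * R r"
          using R_ode elim by auto
        then have e1: "(-2*r^2) * (- (1/2) * deriv (deriv R) r - (1/r) * deriv R r - (Z/r) * R r + W r * R r) = (-2*r^2) * (e * R r)"
          by simp
        have e2: "(-2*r^2) * (- (1/2) * deriv (deriv R) r - (1/r) * deriv R r - (Z/r) * R r + W r * R r)
            = r^2 * deriv (deriv R) r + 2*r*deriv R r + 2*Z*r*R r - 2*r^2*W r*R r"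
          using elim by (simp add: field_simps power2_eq_square)
        have "r^2 * deriv (deriv R) r + 2*r*deriv R r + 2*Z*r*R r - 2*r^2*W r*R r = (-2*r^2) * (e * R r)"
          using trans[OF e2[symmetric] e1] .
        then show ?thesis unfolding g_def by (simp add: algebra_simps)
      qed
      have "2 * r * E' r + r^2 * (deriv (deriv R) r - poly (pderiv (pderiv pR)) r) = h' r"
        unfolding h'_def E'_def pD_def using ode by (simp add: algebra_simps power2_eq_square)
      then show ?case using d3 by simp
    qed
    have AO: "(\<lambda>r. R r - poly pR r) \<in> O[at_right 0](\<lambda>r. r^(m+1))"
      using R_exp unfolding pR_def poly_pR by blast
    have BO: "(\<lambda>r. W r - poly pW r) \<in> O[at_right 0](\<lambda>r. r^(m+1))"
    proof -
      have "(\<lambda>r. W r - poly pW r) \<in> O[at_right 0](\<lambda>r. r^(2*m+2))"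
        using W_exp unfolding pW_def poly_pW by blast
      then show ?thesis by (rule landau_o.big_trans[OF _ powO]) simp
    qed
    have b1: "(\<lambda>r::real. -2*Z*r) \<in> O[at_right 0](\<lambda>_. 1)"
      by (rule tendsto_bigo1[of _ 0]) (auto intro!: tendsto_eq_intros simp: tendsto_ident_at)
    have b2: "(\<lambda>r::real. 2*r^2) \<in> O[at_right 0](\<lambda>_. 1)"
      by (rule tendsto_bigo1[of _ 0]) (auto intro!: tendsto_eq_intros simp: tendsto_ident_at)
    have bW: "(\<lambda>r. W r - e) \<in> O[at_right 0](\<lambda>_. 1)"
    proof -
      obtain B where B: "\<forall>r\<ge>0. \<bar>W r\<bar> \<le> B" using W_bdd by blast
      show ?thesis
      proof (rule bigoI[where c="\<bar>B\<bar> + \<bar>e\<bar>"])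
        show "eventually (\<lambda>x. norm (W x - e) \<le> (\<bar>B\<bar> + \<bar>e\<bar>) * norm (1::real)) (at_right 0)"
          using ev_pos
        proof eventually_elim
          case (elim r)
          then have "\<bar>W r\<bar> \<le> B" using B by auto
          then show ?case by simp
        qed
      qed
    qed
    have bP: "(\<lambda>r. poly pR r) \<in> O[at_right 0](\<lambda>_. 1)" by (rule poly_bigo1)
    have geq: "(\<lambda>r. g r - poly pg r) = (\<lambda>r. (-2*Z*r) * (R r - poly pR r) +
         (2*r^2) * ((W r - e) * (R r - poly pR r) + poly pR r * (W r - poly pW r)))"
      by (rule ext) (simp add: g_def pg_def, algebra)
    have gO: "(\<lambda>r. g r - poly pg r) \<in> O[at_right 0](\<lambda>r. r^(m+1))"
      unfolding geq
      by (rule sum_in_bigo(1)[OF bmult[OF b1 AO] bmult[OF b2 sum_in_bigo(1)[OF bmult[OF bW AO] bmult[OF bP BO]]]])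
    have hO1: "(\<lambda>r. h' r - poly (pg - pD) r) \<in> O[at_right 0](\<lambda>r. r^(m+1))"
    proof -
      have "(\<lambda>r. h' r - poly (pg - pD) r) = (\<lambda>r. g r - poly pg r)"
        by (rule ext) (simp add: h'_def)
      then show ?thesis using gO by simp
    qed
    have sumeq: "(\<Sum>j\<le>m. coeff (pg - pD) j * r^j) = d * r^m" for r :: real
    proof -
      have c: "coeff (pg - pD) j = cc Z e w z j - real j * real (j+1) * z j" if "j \<le> m" for j
        unfolding pg_def pD_def pR_def pW_def by (rule coeff_main) (use that m1 in auto)
      have "{..m} = insert m {..<m}" by auto
      then have "(\<Sum>j\<le>m. coeff (pg - pD) j * r^j) = coeff (pg - pD) m * r^m + (\<Sum>j<m. coeff (pg - pD) j * r^j)"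
        by simp
      also have "(\<Sum>j<m. coeff (pg - pD) j * r^j) = 0"
        by (rule sum.neutral) (use c less.IH in auto)
      finally show ?thesis using c[of m] by (simp add: d_def)
    qed
    have hO: "(\<lambda>r. h' r - d * r^m) \<in> O[at_right 0](\<lambda>r. r^(m+1))"
    proof -
      have "(\<lambda>r. h' r - d * r^m) = (\<lambda>r. (h' r - poly (pg - pD) r) + (poly (pg - pD) r - (\<Sum>j\<le>m. coeff (pg - pD) j * r^j)))"
        apply (rule ext) subgoal for r using sumeq[of r] by linarith done
      then show ?thesis using sum_in_bigo(1)[OF hO1 poly_trunc[of "pg - pD" m]] by simp
    qed
    have EO: "E \<in> O[at_right 0](\<lambda>r. r^(m+1))"
      unfolding E_def by (rule AO)
    have "d = 0" by (rule core[OF m1 dE dh hO EO])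
    then show ?thesis by (simp add: d_def)
  qed
qed

function A :: "real \<Rightarrow> (nat \<Rightarrow> real) \<Rightarrow> nat \<Rightarrow> nat \<Rightarrow> real" where
  "A Z w m j = (if m = 0 then (if j = 0 then 1 else 0)
     else if m = 1 then (if j = 0 then -Z else 0)
     else (-2*Z*A Z w (m-1) j + 2*(\<Sum>a\<le>m-2. om w a * A Z w (m-2-a) j)
           - 2*(if j = 0 then 0 else A Z w (m-2) (j-1))) / (real m * real (m+1)))"
  by pat_completeness auto
termination by (relation "Wellfounded.measure (\<lambda>(Z,w,m,j). m)") auto

declare A.simps[simp del]

lemma A_0: "A Z w 0 j = (if j = 0 then 1 else 0)"
  by (subst A.simps) simp

lemma A_1: "A Z w (Suc 0) j = (if j = 0 then -Z else 0)"
  by (subst A.simps) simp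

lemma A_SS: "A Z w (Suc (Suc k)) j = (-2*Z*A Z w (Suc k) j + 2*(\<Sum>a\<le>k. om w a * A Z w (k-a) j)
           - 2*(if j = 0 then 0 else A Z w k (j-1))) / (real (Suc (Suc k)) * real (Suc (Suc (Suc k))))"
  by (subst A.simps) simp

lemma A_zero: "m < 2*j \<Longrightarrow> A Z w m j = 0"
proof (induction m arbitrary: j rule: less_induct)
  case (less m)
  show ?case
  proof (cases m)
    case 0 then show ?thesis using less.prems by (simp add: A_0)
  next
    case (Suc m')
    show ?thesis
    proof (cases m')
      case 0 then show ?thesis using less.prems Suc by (simp add: A_1)
    next
      case (Suc k)
      have m: "m = Suc (Suc k)" using Suc \<open>m = Suc m'\<close> by simp
      have a1: "A Z w (Suc k) j = 0" using less.IH[of "Suc k" j] less.prems m by simp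
      have a2: "(\<Sum>a\<le>k. om w a * A Z w (k-a) j) = 0"
        by (rule sum.neutral) (use less.IH less.prems m in auto)
      have a3: "A Z w k (j-1) = 0" using less.IH[of k "j-1"] less.prems m by simp
      show ?thesis unfolding m A_SS using a1 a2 a3 by simp
    qed
  qed
qed

lemma A_lead: "A Z w (2*k) k \<noteq> 0"
proof (induction k)
  case 0 then show ?case by (simp add: A_0)
next
  case (Suc k)
  have e: "2 * Suc k = Suc (Suc (2*k))" by simp
  have a1: "A Z w (Suc (2*k)) (Suc k) = 0" by (rule A_zero) simp
  have a2: "(\<Sum>a\<le>2*k. om w a * A Z w (2*k-a) (Suc k)) = 0"
    by (rule sum.neutral) (auto intro!: A_zero)
  show ?case unfolding e A_SS using a1 a2 Suc.IH by simp
qed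

lemma sum_trunc:
  fixes K M :: nat
  assumes "\<forall>j. K < j \<longrightarrow> f j = 0" "K \<le> M"
  shows "(\<Sum>j\<le>M. f j) = (\<Sum>j\<le>K. (f j :: real))"
proof (rule sum.mono_neutral_right)
  show "finite {..M}" by simp
  show "{..K} \<subseteq> {..M}" using assms(2) by auto
  show "\<forall>i\<in>{..M} - {..K}. f i = 0" using assms(1) by auto
qed

lemma A_eq:
  assumes rec: "\<forall>m. real m * real (m+1) * z m = cc Z e w z m"
  shows "z m = (\<Sum>j\<le>m. A Z w m j * e^j) * z 0"
proof (induction m rule: less_induct)
  case (less m)
  define T where "T q = (\<Sum>j\<le>q. A Z w q j * e^j)" for q
  have extT: "(\<Sum>j\<le>M. A Z w q j * e^j) = T q" if "q \<le> M" for q M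
    unfolding T_def by (rule sum_trunc) (use that in \<open>auto intro!: A_zero\<close>)
  show ?case
  proof (cases m)
    case 0 then show ?thesis by (simp add: A_0)
  next
    case (Suc m')
    show ?thesis
    proof (cases m')
      case 0
      have "real 1 * real (1+1) * z 1 = cc Z e w z 1" using rec by blast
      then have "z 1 = - Z * z 0" by (simp add: cc_def)
      then show ?thesis using Suc 0 by (simp add: A_1 A_0)
    next
      case (Suc k)
      have m: "m = Suc (Suc k)" using Suc \<open>m = Suc m'\<close> by simp
      define D where "D = real (Suc (Suc k)) * real (Suc (Suc (Suc k)))"
      have Dpos: "D > 0" unfolding D_def by simp
      have IH1: "z (Suc k) = T (Suc k) * z 0" using less.IH[of "Suc k"] m unfolding T_def by simp
      have IH2: "z (k-a) = T (k-a) * z 0" if "a \<le> k" for a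
        using less.IH[of "k-a"] m unfolding T_def by simp
      have IH3: "z k = T k * z 0" using less.IH[of k] m unfolding T_def by simp
      have rm: "D * z m = -2*Z*z (Suc k) + 2*(\<Sum>a\<le>k. om w a * z (k-a)) - 2*e*z k"
        using spec[OF rec, of m] m unfolding D_def by (simp add: cc_def)
      have s1: "(\<Sum>j\<le>m. A Z w (Suc k) j * e^j) = T (Suc k)" by (rule extT) (simp add: m)
      have s2: "(\<Sum>j\<le>m. (\<Sum>a\<le>k. om w a * A Z w (k-a) j) * e^j) = (\<Sum>a\<le>k. om w a * T (k-a))"
      proof -
        have "(\<Sum>j\<le>m. (\<Sum>a\<le>k. om w a * A Z w (k-a) j) * e^j) = (\<Sum>j\<le>m. \<Sum>a\<le>k. om w a * (A Z w (k-a) j * e^j))"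
          by (simp add: sum_distrib_right mult.assoc)
        also have "\<dots> = (\<Sum>a\<le>k. \<Sum>j\<le>m. om w a * (A Z w (k-a) j * e^j))"
          by (rule sum.swap)
        also have "\<dots> = (\<Sum>a\<le>k. om w a * T (k-a))"
        proof (rule sum.cong)
          fix a assume "a \<in> {..k}"
          then have "k - a \<le> m" using m by simp
          then show "(\<Sum>j\<le>m. om w a * (A Z w (k-a) j * e^j)) = om w a * T (k-a)"
            by (simp add: sum_distrib_left[symmetric] extT)
        qed simp
        finally show ?thesis .
      qed
      have s3: "(\<Sum>j\<le>m. (if j = 0 then 0 else A Z w k (j-1)) * e^j) = e * T k"
      proof -
        have "(\<Sum>j\<le>m. (if j = 0 then 0 else A Z w k (j-1)) * e^j) = (\<Sum>j\<le>Suc k. A Z w k j * e^(Suc j))"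
          unfolding m sum.atMost_Suc_shift[of _ "Suc k"] by simp
        also have "\<dots> = e * (\<Sum>j\<le>Suc k. A Z w k j * e^j)"
          by (simp add: sum_distrib_left algebra_simps)
        also have "\<dots> = e * T k" using extT[of k "Suc k"] by simp
        finally show ?thesis .
      qed
      have "(\<Sum>j\<le>m. A Z w m j * e^j) = (\<Sum>j\<le>m. ((-2*Z) * (A Z w (Suc k) j * e^j)
            + 2 * ((\<Sum>a\<le>k. om w a * A Z w (k-a) j) * e^j)
            - 2 * ((if j = 0 then 0 else A Z w k (j-1)) * e^j)) / D)"
        by (rule sum.cong) (simp_all add: m A_SS D_def algebra_simps)
      also have "\<dots> = ((-2*Z) * (\<Sum>j\<le>m. A Z w (Suc k) j * e^j)
            + 2 * (\<Sum>j\<le>m. (\<Sum>a\<le>k. om w a * A Z w (k-a) j) * e^j)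
            - 2 * (\<Sum>j\<le>m. (if j = 0 then 0 else A Z w k (j-1)) * e^j)) / D"
        by (simp add: sum_divide_distrib[symmetric] sum.distrib sum_subtractf sum_distrib_left sum_negf)
      also have "\<dots> = ((-2*Z) * T (Suc k) + 2 * (\<Sum>a\<le>k. om w a * T (k-a)) - 2 * (e * T k)) / D"
        unfolding s1 s2 s3 ..
      finally have tm: "T m = ((-2*Z) * T (Suc k) + 2 * (\<Sum>a\<le>k. om w a * T (k-a)) - 2 * (e * T k)) / D"
        unfolding T_def .
      have "(\<Sum>a\<le>k. om w a * z (k-a)) = (\<Sum>a\<le>k. om w a * T (k-a)) * z 0"
        unfolding sum_distrib_right by (rule sum.cong) (simp_all add: IH2)
      then have "D * z m = ((-2*Z) * T (Suc k) + 2 * (\<Sum>a\<le>k. om w a * T (k-a)) - 2 * (e * T k)) * z 0"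
        using rm IH1 IH3 by (simp add: algebra_simps)
      then have "z m = T m * z 0" using Dpos unfolding tm by (simp add: field_simps)
      then show ?thesis unfolding T_def .
    qed
  qed
qed

lemma om_vals: "om w 0 = w 0" "om w (Suc 0) = 0" "om w (Suc (Suc 0)) = w (Suc (Suc 0))"
  "om w (Suc (Suc (Suc 0))) = 0"
  by (simp_all add: om_def)

lemma explicit:
  fixes z :: "nat \<Rightarrow> real"
  assumes rec: "\<forall>m. real m * real (m+1) * z m = cc Z e w z m"
  shows "z 1 = - Z * z 0 \<and>
            z 2 = - (1/3) * e * z 0 + (1/3) * (Z^2 + w 0) * z 0 \<and>
            z 3 = (2/9) * Z * e * z 0 - (Z^3/18 + (2/9) * Z * w 0) * z 0 \<and>
            z 4 = (1/30) * e ^ 2 * z 0 - (Z^2/18 + w 0/15) * e * z 0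
                     + (Z^4/180 + Z^2 * w 0/18 + (w 0)^2/30 + w 2/10) * z 0 \<and>
            z 5 = - (23/1350) * Z * e ^ 2 * z 0
                     + (Z^3/135 + (23/675) * w 0 * Z) * e * z 0
                     - (Z^5/2700 + Z^3 * w 0/135 + (23/1350) * Z * (w 0)^2
                        + (11/150) * Z * w 2) * z 0"
proof -
  have r1: "2 * z 1 = -2*Z*z 0" using spec[OF rec, of 1] by (simp add: cc_def)
  have r2: "6 * z 2 = -2*Z*z 1 + 2*(w 0 * z 0) - 2*e*z 0"
    using spec[OF rec, of 2] by (simp add: cc_def om_vals)
  have r3: "12 * z 3 = -2*Z*z 2 + 2*(w 0 * z 1) - 2*e*z 1"
    using spec[OF rec, of 3] by (simp add: cc_def om_vals eval_nat_numeral)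
  have r4: "20 * z 4 = -2*Z*z 3 + 2*(w 0 * z 2 + w 2 * z 0) - 2*e*z 2"
    using spec[OF rec, of 4] by (simp add: cc_def om_vals eval_nat_numeral)
  have r5: "30 * z 5 = -2*Z*z 4 + 2*(w 0 * z 3 + w 2 * z 1) - 2*e*z 3"
    using spec[OF rec, of 5] by (simp add: cc_def om_vals eval_nat_numeral)
  have z1: "z 1 = - Z * z 0" using r1 by simp
  have z2: "z 2 = - (1/3) * e * z 0 + (1/3) * (Z^2 + w 0) * z 0"
    using r2 unfolding z1 by (simp add: field_simps power2_eq_square)
  have z3: "z 3 = (2/9) * Z * e * z 0 - (Z^3/18 + (2/9) * Z * w 0) * z 0"
    using r3 unfolding z1 z2 by (simp add: field_simps power2_eq_square power3_eq_cube)
  have z4: "z 4 = (1/30) * e ^ 2 * z 0 - (Z^2/18 + w 0/15) * e * z 0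
                     + (Z^4/180 + Z^2 * w 0/18 + (w 0)^2/30 + w 2/10) * z 0"
    using r4 unfolding z2 z3 by (simp add: field_simps) algebra
  have z5: "z 5 = - (23/1350) * Z * e ^ 2 * z 0
                     + (Z^3/135 + (23/675) * w 0 * Z) * e * z 0
                     - (Z^5/2700 + Z^3 * w 0/135 + (23/1350) * Z * (w 0)^2
                        + (11/150) * Z * w 2) * z 0"
    using r5 unfolding z1 z3 z4 by (simp add: field_simps) algebra
  show ?thesis using z1 z2 z3 z4 z5 by blast
qed

theorem lemma5p7:
  fixes Z :: real and W :: "real \<Rightarrow> real" and w :: "nat \<Rightarrow> real"
    and n :: nat and R :: "nat \<Rightarrow> real \<Rightarrow> real" and \<epsilon> :: "nat \<Rightarrow> real"
    and \<zeta> :: "nat \<Rightarrow> nat \<Rightarrow> real"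
  assumes Zpos: "Z > 0"
    and W_bdd: "\<exists>B. \<forall>r\<ge>0. \<bar>W r\<bar> \<le> B"
    and W_smooth: "smooth_fun (\<lambda>x::real^3. W (norm x))"
    and W_exp: "\<forall>N. (\<lambda>r. W r - (\<Sum>k\<le>N. w (2*k) * r ^ (2*k)))
                      \<in> O[at_right 0](\<lambda>r. r ^ (2*N+2))"
    and R_cont: "\<forall>i\<in>{1..n}. continuous_on {0..} (R i)"
    and R_diff: "\<forall>i\<in>{1..n}. \<forall>r>0.
                   (R i has_real_derivative deriv (R i) r) (at r) \<and>
                   (deriv (R i) has_real_derivative deriv (deriv (R i)) r) (at r)"
    and R_ode: "\<forall>i\<in>{1..n}. \<forall>r>0.
                  - (1/2) * deriv (deriv (R i)) r - (1/r) * deriv (R i) r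
                  - (Z/r) * R i r + W r * R i r = \<epsilon> i * R i r"
    and R_norm: "\<forall>i\<in>{1..n}. ((\<lambda>r. (R i r)^2 * r^2) has_integral 1) {0<..}"
    and R_exp: "\<forall>i\<in>{1..n}. \<forall>N. (\<lambda>r. R i r - (\<Sum>j\<le>N. \<zeta> j i * r ^ j))
                      \<in> O[at_right 0](\<lambda>r. r ^ (N+1))"
  shows "(\<exists>\<mu> \<nu> :: nat \<Rightarrow> nat \<Rightarrow> real.
            (\<forall>k<n. \<forall>i\<in>{1..n}.
                \<zeta> (2*k) i = (\<Sum>j\<le>k. \<mu> k j * \<epsilon> i ^ j * \<zeta> 0 i) \<and>
                \<zeta> (2*k+1) i = (\<Sum>j\<le>k. \<nu> k j * \<epsilon> i ^ j * \<zeta> 0 i)) \<and>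
            (\<forall>k<n. \<mu> k k \<noteq> 0))
       \<and> (\<forall>i\<in>{1..n}.
            \<zeta> 1 i = - Z * \<zeta> 0 i \<and>
            \<zeta> 2 i = - (1/3) * \<epsilon> i * \<zeta> 0 i + (1/3) * (Z^2 + w 0) * \<zeta> 0 i \<and>
            \<zeta> 3 i = (2/9) * Z * \<epsilon> i * \<zeta> 0 i - (Z^3/18 + (2/9) * Z * w 0) * \<zeta> 0 i \<and>
            \<zeta> 4 i = (1/30) * \<epsilon> i ^ 2 * \<zeta> 0 i - (Z^2/18 + w 0/15) * \<epsilon> i * \<zeta> 0 i
                     + (Z^4/180 + Z^2 * w 0/18 + (w 0)^2/30 + w 2/10) * \<zeta> 0 i \<and>
            \<zeta> 5 i = - (23/1350) * Z * \<epsilon> i ^ 2 * \<zeta> 0 i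
                     + (Z^3/135 + (23/675) * w 0 * Z) * \<epsilon> i * \<zeta> 0 i
                     - (Z^5/2700 + Z^3 * w 0/135 + (23/1350) * Z * (w 0)^2
                        + (11/150) * Z * w 2) * \<zeta> 0 i)"
proof -
  have rec: "\<forall>m. real m * real (m+1) * (\<lambda>j. \<zeta> j i) m = cc Z (\<epsilon> i) w (\<lambda>j. \<zeta> j i) m"
    if i: "i \<in> {1..n}" for i
  proof
    fix m
    show "real m * real (m+1) * (\<lambda>j. \<zeta> j i) m = cc Z (\<epsilon> i) w (\<lambda>j. \<zeta> j i) m"
      by (rule recur[OF W_bdd W_exp bspec[OF R_diff i] bspec[OF R_ode i] bspec[OF R_exp i]])
  qed
  have part1: "\<zeta> (2*k) i = (\<Sum>j\<le>k. A Z w (2*k) j * \<epsilon> i ^ j * \<zeta> 0 i) \<and>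
                \<zeta> (2*k+1) i = (\<Sum>j\<le>k. A Z w (2*k+1) j * \<epsilon> i ^ j * \<zeta> 0 i)"
    if i: "i \<in> {1..n}" for k i
  proof
    have "\<zeta> (2*k) i = (\<Sum>j\<le>2*k. A Z w (2*k) j * \<epsilon> i ^ j) * \<zeta> 0 i"
      using A_eq[OF rec[OF i], of "2*k"] by simp
    also have "(\<Sum>j\<le>2*k. A Z w (2*k) j * \<epsilon> i ^ j) = (\<Sum>j\<le>k. A Z w (2*k) j * \<epsilon> i ^ j)"
      by (rule sum_trunc) (auto intro!: A_zero)
    finally show "\<zeta> (2*k) i = (\<Sum>j\<le>k. A Z w (2*k) j * \<epsilon> i ^ j * \<zeta> 0 i)"
      by (simp add: sum_distrib_right)
  next
    have "\<zeta> (2*k+1) i = (\<Sum>j\<le>2*k+1. A Z w (2*k+1) j * \<epsilon> i ^ j) * \<zeta> 0 i"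
      using A_eq[OF rec[OF i], of "2*k+1"] by simp
    also have "(\<Sum>j\<le>2*k+1. A Z w (2*k+1) j * \<epsilon> i ^ j) = (\<Sum>j\<le>k. A Z w (2*k+1) j * \<epsilon> i ^ j)"
      by (rule sum_trunc) (auto intro!: A_zero)
    finally show "\<zeta> (2*k+1) i = (\<Sum>j\<le>k. A Z w (2*k+1) j * \<epsilon> i ^ j * \<zeta> 0 i)"
      by (simp add: sum_distrib_right)
  qed
  show ?thesis
  proof (intro conjI)
    show "\<exists>\<mu> \<nu> :: nat \<Rightarrow> nat \<Rightarrow> real.
            (\<forall>k<n. \<forall>i\<in>{1..n}.
                \<zeta> (2*k) i = (\<Sum>j\<le>k. \<mu> k j * \<epsilon> i ^ j * \<zeta> 0 i) \<and>
                \<zeta> (2*k+1) i = (\<Sum>j\<le>k. \<nu> k j * \<epsilon> i ^ j * \<zeta> 0 i)) \<and>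
            (\<forall>k<n. \<mu> k k \<noteq> 0)"
      by (rule exI[of _ "\<lambda>k j. A Z w (2*k) j"], rule exI[of _ "\<lambda>k j. A Z w (2*k+1) j"])
         (use part1 A_lead in blast)
    show "\<forall>i\<in>{1..n}.
            \<zeta> 1 i = - Z * \<zeta> 0 i \<and>
            \<zeta> 2 i = - (1/3) * \<epsilon> i * \<zeta> 0 i + (1/3) * (Z^2 + w 0) * \<zeta> 0 i \<and>
            \<zeta> 3 i = (2/9) * Z * \<epsilon> i * \<zeta> 0 i - (Z^3/18 + (2/9) * Z * w 0) * \<zeta> 0 i \<and>
            \<zeta> 4 i = (1/30) * \<epsilon> i ^ 2 * \<zeta> 0 i - (Z^2/18 + w 0/15) * \<epsilon> i * \<zeta> 0 i
                     + (Z^4/180 + Z^2 * w 0/18 + (w 0)^2/30 + w 2/10) * \<zeta> 0 i \<and>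
            \<zeta> 5 i = - (23/1350) * Z * \<epsilon> i ^ 2 * \<zeta> 0 i
                     + (Z^3/135 + (23/675) * w 0 * Z) * \<epsilon> i * \<zeta> 0 i
                     - (Z^5/2700 + Z^3 * w 0/135 + (23/1350) * Z * (w 0)^2
                        + (11/150) * Z * w 2) * \<zeta> 0 i"
    proof
      fix i assume i: "i \<in> {1..n}"
      show "\<zeta> 1 i = - Z * \<zeta> 0 i \<and>
            \<zeta> 2 i = - (1/3) * \<epsilon> i * \<zeta> 0 i + (1/3) * (Z^2 + w 0) * \<zeta> 0 i \<and>
            \<zeta> 3 i = (2/9) * Z * \<epsilon> i * \<zeta> 0 i - (Z^3/18 + (2/9) * Z * w 0) * \<zeta> 0 i \<and>
            \<zeta> 4 i = (1/30) * \<epsilon> i ^ 2 * \<zeta> 0 i - (Z^2/18 + w 0/15) * \<epsilon> i * \<zeta> 0 i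
                     + (Z^4/180 + Z^2 * w 0/18 + (w 0)^2/30 + w 2/10) * \<zeta> 0 i \<and>
            \<zeta> 5 i = - (23/1350) * Z * \<epsilon> i ^ 2 * \<zeta> 0 i
                     + (Z^3/135 + (23/675) * w 0 * Z) * \<epsilon> i * \<zeta> 0 i
                     - (Z^5/2700 + Z^3 * w 0/135 + (23/1350) * Z * (w 0)^2
                        + (11/150) * Z * w 2) * \<zeta> 0 i"
        using explicit[OF rec[OF i]] by simp
    qed
  qed
qed

end
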